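(* Let $\mathfrak a$ be an abelian ideal of $\mathfrak b$, $\mathcal S\in\mathfrak S_{\mathfrak a}$, $\mathcal M_{\mathcal S}=\{\gamma+\delta\mid\gamma\in\mathcal S,\ \delta\in\Delta^+,\ \gamma+\delta\in\Delta^+\}$ and $J_{\mathcal S}=\Delta_{\mathfrak a}\setminus(\mathcal S\sqcup\mathcal M_{\mathcal S})$. Suppose $\gamma^*\in\max(J_{\mathcal S})$ and $\gamma^*-\delta\in J_{\mathcal S}$ for some $\delta\in\Delta^+$. Let $\mu\in J_{\mathcal S}$. (1) If $\mu-\delta\in\Delta_{\mathfrak a}$, then $\mu-\delta\in J_{\mathcal S}$. (2) If $\mu-2\delta\in\Delta_{\mathfrak a}$, then both $\mu-\delta$ and $\mu-2\delta$ belong to $J_{\mathcal S}$.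
   Context: Let $G$ be a connected simple algebraic group over an algebraically closed field of characteristic zero, $B$ a Borel subgroup, $T\subset B$ a maximal torus, $\mathfrak b=\mathrm{Lie}(B)$, $\Delta$ the root system of $(G,T)$, $\Delta^+$ the positive roots determined by $B$, with partial order $\mu\preccurlyeq\nu$ iff $\nu-\mu$ is a nonnegative integral combination of simple roots; $\max(M)$ is the set of maximal elements of $M$. An abelian ideal of $\mathfrak b$ is a subspace $\mathfrak a\subset\mathfrak b$ with $[\mathfrak b,\mathfrak a]\subset\mathfrak a$, $[\mathfrak a,\mathfrak a]=0$; it is the sum of root spaces for roots in $\Delta_{\mathfrak a}\subset\Delta^+$. Two distinct roots are strongly orthogonal if neither their sum nor their difference is a root; $\mathfrak S_{\mathfrak a}$ is the set of strongly orthogonal subsets of $\Delta_{\mathfrak a}$. *)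

theory Defs
  imports "HOL-Analysis.Analysis"
begin

definition refl_root :: "'a::euclidean_space \<Rightarrow> 'a \<Rightarrow> 'a" where
  "refl_root \<alpha> \<beta> = \<beta> - (2 * (\<beta> \<bullet> \<alpha>) / (\<alpha> \<bullet> \<alpha>)) *\<^sub>R \<alpha>"

definition root_system :: "'a::euclidean_space set \<Rightarrow> bool" where
  "root_system R \<longleftrightarrow> finite R \<and> 0 \<notin> R \<and> span R = UNIV \<and>
     (\<forall>\<alpha>\<in>R. \<forall>\<beta>\<in>R. refl_root \<alpha> \<beta> \<in> R) \<and>
     (\<forall>\<alpha>\<in>R. \<forall>\<beta>\<in>R. 2 * (\<beta> \<bullet> \<alpha>) / (\<alpha> \<bullet> \<alpha>) \<in> \<int>) \<and>
     (\<forall>\<alpha>\<in>R. \<forall>c::real. c *\<^sub>R \<alpha> \<in> R \<longrightarrow> c = 1 \<or> c = -1)"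

definition irreducible_rs :: "'a::euclidean_space set \<Rightarrow> bool" where
  "irreducible_rs R \<longleftrightarrow> R \<noteq> {} \<and>
     \<not> (\<exists>R1 R2. R1 \<noteq> {} \<and> R2 \<noteq> {} \<and> R = R1 \<union> R2 \<and>
          (\<forall>\<alpha>\<in>R1. \<forall>\<beta>\<in>R2. \<alpha> \<bullet> \<beta> = 0))"

definition nonneg_comb :: "'a::euclidean_space set \<Rightarrow> 'a \<Rightarrow> bool" where
  "nonneg_comb P v \<longleftrightarrow> (\<exists>c::'a \<Rightarrow> nat. v = (\<Sum>\<beta>\<in>P. real (c \<beta>) *\<^sub>R \<beta>))"

definition is_base :: "'a::euclidean_space set \<Rightarrow> 'a set \<Rightarrow> bool" where
  "is_base R P \<longleftrightarrow> P \<subseteq> R \<and> independent P \<and>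
     (\<forall>\<alpha>\<in>R. nonneg_comb P \<alpha> \<or> nonneg_comb P (- \<alpha>))"

definition pos_roots :: "'a::euclidean_space set \<Rightarrow> 'a set \<Rightarrow> 'a set" where
  "pos_roots R P = {\<alpha>\<in>R. nonneg_comb P \<alpha>}"

definition root_le :: "'a::euclidean_space set \<Rightarrow> 'a \<Rightarrow> 'a \<Rightarrow> bool" where
  "root_le P \<mu> \<nu> \<longleftrightarrow> nonneg_comb P (\<nu> - \<mu>)"

definition max_elems :: "'a::euclidean_space set \<Rightarrow> 'a set \<Rightarrow> 'a set" where
  "max_elems P M = {\<mu>\<in>M. \<forall>\<nu>\<in>M. root_le P \<mu> \<nu> \<longrightarrow> \<nu> = \<mu>}"

text \<open>Root set \<open>\<Delta>_a\<close> of an abelian ideal \<open>a\<close> of \<open>b\<close>: \<open>a = \<Oplus>_{\<mu>\<in>A} g_\<mu>\<close>;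
  \<open>[b,a] \<subseteq> a\<close> means closure under adding positive roots, \<open>[a,a]=0\<close> means
  no sum of two roots of \<open>A\<close> is a root (char 0, \<open>[g_\<alpha>,g_\<beta>] = g_{\<alpha>+\<beta>}\<close>).\<close>
definition abelian_ideal_roots :: "'a::euclidean_space set \<Rightarrow> 'a set \<Rightarrow> 'a set \<Rightarrow> bool" where
  "abelian_ideal_roots R P A \<longleftrightarrow> A \<subseteq> pos_roots R P \<and>
     (\<forall>\<mu>\<in>A. \<forall>\<alpha>\<in>pos_roots R P. \<mu> + \<alpha> \<in> R \<longrightarrow> \<mu> + \<alpha> \<in> A) \<and>
     (\<forall>\<mu>\<in>A. \<forall>\<nu>\<in>A. \<mu> + \<nu> \<notin> R)"

definition strongly_orth :: "'a::euclidean_space set \<Rightarrow> 'a \<Rightarrow> 'a \<Rightarrow> bool" where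
  "strongly_orth R \<alpha> \<beta> \<longleftrightarrow> \<alpha> \<noteq> \<beta> \<and> \<alpha> + \<beta> \<notin> R \<and> \<alpha> - \<beta> \<notin> R"

definition so_subsets :: "'a::euclidean_space set \<Rightarrow> 'a set \<Rightarrow> 'a set set" where
  "so_subsets R A = {S. S \<subseteq> A \<and> (\<forall>\<alpha>\<in>S. \<forall>\<beta>\<in>S. \<alpha> \<noteq> \<beta> \<longrightarrow> strongly_orth R \<alpha> \<beta>)}"

definition M_set :: "'a::euclidean_space set \<Rightarrow> 'a set \<Rightarrow> 'a set \<Rightarrow> 'a set" where
  "M_set R P S = {\<gamma> + \<delta> | \<gamma> \<delta>. \<gamma> \<in> S \<and> \<delta> \<in> pos_roots R P \<and> \<gamma> + \<delta> \<in> pos_roots R P}"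

definition J_set :: "'a::euclidean_space set \<Rightarrow> 'a set \<Rightarrow> 'a set \<Rightarrow> 'a set \<Rightarrow> 'a set" where
  "J_set R P A S = A - (S \<union> M_set R P S)"

end

theory Submission
  imports Defs
begin

lemma nn_add:
  assumes "nonneg_comb P u" "nonneg_comb P v"
  shows "nonneg_comb P (u + v)"
proof -
  obtain c d where c: "u = (\<Sum>\<beta>\<in>P. real (c \<beta>) *\<^sub>R \<beta>)" and d: "v = (\<Sum>\<beta>\<in>P. real (d \<beta>) *\<^sub>R \<beta>)"
    using assms unfolding nonneg_comb_def by blast
  have "u + v = (\<Sum>\<beta>\<in>P. real (c \<beta> + d \<beta>) *\<^sub>R \<beta>)"
    unfolding c d by (simp add: sum.distrib scaleR_add_left)
  thus ?thesis unfolding nonneg_comb_def by (rule exI[where x="\<lambda>\<beta>. c \<beta> + d \<beta>"])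
qed

lemma nn_antisym:
  assumes "independent P" "nonneg_comb P v" "nonneg_comb P (- v)"
  shows "v = 0"
proof -
  obtain c d where c: "v = (\<Sum>\<beta>\<in>P. real (c \<beta>) *\<^sub>R \<beta>)" and d: "- v = (\<Sum>\<beta>\<in>P. real (d \<beta>) *\<^sub>R \<beta>)"
    using assms unfolding nonneg_comb_def by blast
  have fin: "finite P" and ind: "\<forall>e. (\<Sum>\<beta>\<in>P. e \<beta> *\<^sub>R \<beta>) = 0 \<longrightarrow> (\<forall>\<beta>\<in>P. e \<beta> = 0)"
    using assms(1) unfolding independent_explicit by auto
  have "(\<Sum>\<beta>\<in>P. real (c \<beta> + d \<beta>) *\<^sub>R \<beta>) = (\<Sum>\<beta>\<in>P. real (c \<beta>) *\<^sub>R \<beta>) + (\<Sum>\<beta>\<in>P. real (d \<beta>) *\<^sub>R \<beta>)"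
    by (simp add: sum.distrib scaleR_add_left)
  also have "\<dots> = v + - v" using c d by simp
  finally have "(\<Sum>\<beta>\<in>P. real (c \<beta> + d \<beta>) *\<^sub>R \<beta>) = 0" by simp
  hence "\<forall>\<beta>\<in>P. real (c \<beta> + d \<beta>) = 0" using spec[OF ind, of "\<lambda>\<beta>. real (c \<beta> + d \<beta>)"] by simp
  hence "\<forall>\<beta>\<in>P. c \<beta> = 0" by (metis add_is_0 of_nat_eq_0_iff)
  thus ?thesis unfolding c by simp
qed

lemma neg_root:
  assumes "root_system R" "\<alpha> \<in> R"
  shows "- \<alpha> \<in> R"
proof -
  have "refl_root \<alpha> \<alpha> \<in> R" using assms unfolding root_system_def by blast
  moreover have "\<alpha> \<bullet> \<alpha> \<noteq> 0" using assms unfolding root_system_def by auto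
  moreover have "\<alpha> - 2 *\<^sub>R \<alpha> = - \<alpha>" by (simp add: scaleR_2)
  ultimately show ?thesis unfolding refl_root_def by simp
qed

lemma root_diff:
  assumes rs: "root_system R" and a: "\<alpha> \<in> R" and b: "\<beta> \<in> R"
    and pos: "\<alpha> \<bullet> \<beta> > 0" and ne: "\<alpha> \<noteq> \<beta>"
  shows "\<alpha> - \<beta> \<in> R"
proof -
  have na: "\<alpha> \<bullet> \<alpha> > 0" and nb: "\<beta> \<bullet> \<beta> > 0"
    using rs a b unfolding root_system_def by auto
  define x where "x = 2 * (\<alpha> \<bullet> \<beta>) / (\<beta> \<bullet> \<beta>)"
  define y where "y = 2 * (\<beta> \<bullet> \<alpha>) / (\<alpha> \<bullet> \<alpha>)"
  have xi: "x \<in> \<int>" and yi: "y \<in> \<int>" using rs a b unfolding root_system_def x_def y_def by auto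
  then obtain m n :: int where m: "x = of_int m" and n: "y = of_int n"
    by (metis Ints_cases)
  have xp: "x > 0" using pos nb unfolding x_def by simp
  have yp: "y > 0" using pos na unfolding y_def by (simp add: inner_commute)
  have xy: "x * y = 4 * (\<alpha> \<bullet> \<beta>)^2 / ((\<alpha> \<bullet> \<alpha>) * (\<beta> \<bullet> \<beta>))"
    unfolding x_def y_def by (simp add: inner_commute power2_eq_square field_simps)
  have cs: "(\<alpha> \<bullet> \<beta>)^2 \<le> (\<alpha> \<bullet> \<alpha>) * (\<beta> \<bullet> \<beta>)"
  proof -
    have "\<bar>\<alpha> \<bullet> \<beta>\<bar> \<le> norm \<alpha> * norm \<beta>" by (rule Cauchy_Schwarz_ineq2)
    hence "\<bar>\<alpha> \<bullet> \<beta>\<bar>^2 \<le> (norm \<alpha> * norm \<beta>)^2"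
      by (metis abs_ge_zero power_mono)
    thus ?thesis by (simp add: power_mult_distrib power2_norm_eq_inner)
  qed
  have ne4: "(\<alpha> \<bullet> \<beta>)^2 \<noteq> (\<alpha> \<bullet> \<alpha>) * (\<beta> \<bullet> \<beta>)"
  proof
    assume eq: "(\<alpha> \<bullet> \<beta>)^2 = (\<alpha> \<bullet> \<alpha>) * (\<beta> \<bullet> \<beta>)"
    have "\<bar>\<alpha> \<bullet> \<beta>\<bar> = norm \<alpha> * norm \<beta>"
    proof -
      have "\<bar>\<alpha> \<bullet> \<beta>\<bar>^2 = (norm \<alpha> * norm \<beta>)^2"
        using eq by (simp add: power_mult_distrib power2_norm_eq_inner)
      thus ?thesis using power2_eq_iff_nonneg[of "\<bar>\<alpha> \<bullet> \<beta>\<bar>" "norm \<alpha> * norm \<beta>"] by simp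
    qed
    hence "norm \<alpha> *\<^sub>R \<beta> = norm \<beta> *\<^sub>R \<alpha> \<or> norm \<alpha> *\<^sub>R \<beta> = - norm \<beta> *\<^sub>R \<alpha>"
      by (simp add: norm_cauchy_schwarz_abs_eq)
    moreover have nbz: "norm \<beta> > 0" using nb by auto
    ultimately obtain c where c: "\<alpha> = c *\<^sub>R \<beta>" and cpos: "c > 0 \<or> c < 0"
    proof (elim disjE)
      assume h: "norm \<alpha> *\<^sub>R \<beta> = norm \<beta> *\<^sub>R \<alpha>"
      have "\<alpha> = (1 / norm \<beta>) *\<^sub>R (norm \<beta> *\<^sub>R \<alpha>)" using nbz by simp
      also have "\<dots> = (1 / norm \<beta>) *\<^sub>R (norm \<alpha> *\<^sub>R \<beta>)" using h by simp
      also have "\<dots> = (norm \<alpha> / norm \<beta>) *\<^sub>R \<beta>" by simp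
      finally have "\<alpha> = (norm \<alpha> / norm \<beta>) *\<^sub>R \<beta>" .
      moreover have "norm \<alpha> > 0" using na by auto
      ultimately show thesis using that nbz by auto
    next
      assume h: "norm \<alpha> *\<^sub>R \<beta> = - norm \<beta> *\<^sub>R \<alpha>"
      have "\<alpha> = (- 1 / norm \<beta>) *\<^sub>R (- norm \<beta> *\<^sub>R \<alpha>)" using nbz by simp
      also have "\<dots> = (- 1 / norm \<beta>) *\<^sub>R (norm \<alpha> *\<^sub>R \<beta>)" using h by simp
      also have "\<dots> = (- norm \<alpha> / norm \<beta>) *\<^sub>R \<beta>" by simp
      finally have e: "\<alpha> = (- norm \<alpha> / norm \<beta>) *\<^sub>R \<beta>" .
      moreover have "norm \<alpha> > 0" using na by auto
      hence "- norm \<alpha> / norm \<beta> < 0" using nbz by (simp add: divide_pos_pos)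
      ultimately show thesis using that[of "- norm \<alpha> / norm \<beta>"] by blast
    qed
    have "c = 1 \<or> c = -1" using rs a b c unfolding root_system_def by blast
    moreover have "c \<noteq> 1" using ne c by auto
    ultimately have "\<alpha> = - \<beta>" using c by simp
    thus False using pos nb by simp
  qed
  have "x * y < 4"
  proof -
    have "(\<alpha> \<bullet> \<beta>)^2 < (\<alpha> \<bullet> \<alpha>) * (\<beta> \<bullet> \<beta>)" using cs ne4 by simp
    moreover have "(\<alpha> \<bullet> \<alpha>) * (\<beta> \<bullet> \<beta>) > 0" using na nb by simp
    ultimately show ?thesis unfolding xy by (simp add: divide_less_eq)
  qed
  hence "m * n < 4" using m n by (metis of_int_less_iff of_int_mult of_int_numeral)
  moreover have "m \<ge> 1" "n \<ge> 1" using xp yp m n by auto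
  ultimately have "m = 1 \<or> n = 1"
  proof -
    assume a1: "m * n < 4" and a2: "m \<ge> 1" "n \<ge> 1"
    show ?thesis
    proof (rule ccontr)
      assume "\<not> (m = 1 \<or> n = 1)"
      hence "m \<ge> 2" "n \<ge> 2" using a2 by auto
      hence "2 * 2 \<le> m * n" by (intro mult_mono) auto
      thus False using a1 by simp
    qed
  qed
  thus ?thesis
  proof
    assume "m = 1"
    hence "refl_root \<beta> \<alpha> = \<alpha> - \<beta>" unfolding refl_root_def using m x_def pos by simp
    moreover have "refl_root \<beta> \<alpha> \<in> R" using rs a b unfolding root_system_def by blast
    ultimately show ?thesis by simp
  next
    assume "n = 1"
    hence "refl_root \<alpha> \<beta> = \<beta> - \<alpha>" unfolding refl_root_def using n y_def pos by (simp add: inner_commute)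
    moreover have "refl_root \<alpha> \<beta> \<in> R" using rs a b unfolding root_system_def by blast
    ultimately have "\<beta> - \<alpha> \<in> R" by simp
    from neg_root[OF rs this] show ?thesis by simp
  qed
qed


lemma A_nonneg:
  assumes rs: "root_system R" and base: "is_base R P" and ab: "abelian_ideal_roots R P A"
    and x: "x \<in> A" and y: "y \<in> A"
  shows "x \<bullet> y \<ge> 0"
proof (rule ccontr)
  assume "\<not> x \<bullet> y \<ge> 0"
  hence neg: "x \<bullet> (- y) > 0" by simp
  have xR: "x \<in> R" and yR: "y \<in> R" and xn: "nonneg_comb P x" and yn: "nonneg_comb P y"
    using ab x y unfolding abelian_ideal_roots_def pos_roots_def by auto
  have ind: "independent P" using base unfolding is_base_def by auto
  have "x \<noteq> - y"
  proof
    assume "x = - y"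
    hence "nonneg_comb P (- x)" using yn by simp
    hence "x = 0" using nn_antisym[OF ind xn] by simp
    thus False using xR rs unfolding root_system_def by auto
  qed
  hence "x - (- y) \<in> R" using root_diff[OF rs xR neg_root[OF rs yR] neg] by simp
  hence "x + y \<in> R" by simp
  thus False using ab x y unfolding abelian_ideal_roots_def by auto
qed

lemma part1:
  fixes R P A S :: "'a::euclidean_space set" and \<gamma>s \<delta> \<mu> :: 'a
  assumes rs: "root_system R" and base: "is_base R P"
    and ab: "abelian_ideal_roots R P A"
    and so: "S \<in> so_subsets R A"
    and gmax: "\<gamma>s \<in> max_elems P (J_set R P A S)"
    and dpos: "\<delta> \<in> pos_roots R P" and xJ: "\<gamma>s - \<delta> \<in> J_set R P A S"
    and muJ: "\<mu> \<in> J_set R P A S" and mdA: "\<mu> - \<delta> \<in> A"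
  shows "\<mu> - \<delta> \<in> J_set R P A S"
proof -
  have ind: "independent P" using base unfolding is_base_def by auto
  have Apos: "A \<subseteq> pos_roots R P" using ab unfolding abelian_ideal_roots_def by auto
  have SA: "S \<subseteq> A" using so unfolding so_subsets_def by auto
  have posR: "\<And>z. z \<in> pos_roots R P \<Longrightarrow> z \<in> R \<and> nonneg_comb P z" unfolding pos_roots_def by auto
  have inM: "\<And>g e. g \<in> S \<Longrightarrow> e \<in> pos_roots R P \<Longrightarrow> g + e \<in> pos_roots R P \<Longrightarrow> g + e \<in> M_set R P S"
    unfolding M_set_def by blast
  have mu: "\<mu> \<in> A" "\<mu> \<notin> S" "\<mu> \<notin> M_set R P S" using muJ unfolding J_set_def by auto
  have muP: "\<mu> \<in> pos_roots R P" using mu Apos by auto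
  have notS: "\<mu> - \<delta> \<notin> S"
  proof
    assume h: "\<mu> - \<delta> \<in> S"
    have "(\<mu> - \<delta>) + \<delta> \<in> M_set R P S" using inM[OF h dpos] muP by simp
    thus False using mu by simp
  qed
  have notM: "\<mu> - \<delta> \<notin> M_set R P S"
  proof
    assume "\<mu> - \<delta> \<in> M_set R P S"
    then obtain \<gamma> \<epsilon> where md: "\<mu> - \<delta> = \<gamma> + \<epsilon>" and gS: "\<gamma> \<in> S" and eP: "\<epsilon> \<in> pos_roots R P"
      and geP: "\<gamma> + \<epsilon> \<in> pos_roots R P"
      unfolding M_set_def by auto
    have gA: "\<gamma> \<in> A" using gS SA by auto
    have gR: "\<gamma> \<in> R" using gA Apos posR by auto
    have eR: "\<epsilon> \<in> R" and en: "nonneg_comb P \<epsilon>" using eP posR by auto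
    have dR: "\<delta> \<in> R" and dn: "nonneg_comb P \<delta>" using dpos posR by auto
    have muR: "\<mu> \<in> R" using muP posR by auto
    have geA: "\<gamma> + \<epsilon> \<in> A" using md mdA by simp
    have h1: "\<mu> \<bullet> \<gamma> = 0"
    proof -
      have "\<mu> \<bullet> \<gamma> \<ge> 0" using A_nonneg[OF rs base ab mu(1) gA] .
      moreover have "\<not> \<mu> \<bullet> \<gamma> > 0"
      proof
        assume p: "\<mu> \<bullet> \<gamma> > 0"
        have "\<mu> \<noteq> \<gamma>" using mu gS by auto
        hence r: "\<mu> - \<gamma> \<in> R" using root_diff[OF rs muR gR p] by simp
        have "\<mu> - \<gamma> = \<delta> + \<epsilon>" using md by (simp add: algebra_simps)
        hence "nonneg_comb P (\<mu> - \<gamma>)" using nn_add[OF dn en] by simp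
        hence "\<mu> - \<gamma> \<in> pos_roots R P" using r unfolding pos_roots_def by auto
        hence "\<gamma> + (\<mu> - \<gamma>) \<in> M_set R P S" by (rule inM[OF gS]) (simp add: muP)
        thus False using mu by simp
      qed
      ultimately show ?thesis by simp
    qed
    have h2: "(\<gamma> + \<epsilon>) \<bullet> \<gamma> > 0"
    proof -
      have "(\<gamma> + \<epsilon>) \<bullet> \<gamma> \<ge> 0" using A_nonneg[OF rs base ab geA gA] .
      moreover have "(\<gamma> + \<epsilon>) \<bullet> \<gamma> \<noteq> 0"
      proof
        assume z: "(\<gamma> + \<epsilon>) \<bullet> \<gamma> = 0"
        have gg: "\<gamma> \<bullet> \<gamma> \<noteq> 0" using gR rs unfolding root_system_def by auto
        have eg: "\<epsilon> \<bullet> \<gamma> = - (\<gamma> \<bullet> \<gamma>)" using z by (simp add: inner_add_left)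
        have "2 * (\<epsilon> \<bullet> \<gamma>) / (\<gamma> \<bullet> \<gamma>) = -2" using eg gg by simp
        hence "refl_root \<gamma> \<epsilon> = (\<gamma> + \<epsilon>) + \<gamma>" unfolding refl_root_def by (simp add: scaleR_2)
        moreover have "refl_root \<gamma> \<epsilon> \<in> R" using rs gR eR unfolding root_system_def by blast
        ultimately have "(\<gamma> + \<epsilon>) + \<gamma> \<in> R" by simp
        thus False using ab geA gA unfolding abelian_ideal_roots_def by blast
      qed
      ultimately show ?thesis by simp
    qed
    have h3: "\<delta> \<bullet> \<gamma> < 0"
    proof -
      have "\<mu> = (\<gamma> + \<epsilon>) + \<delta>" using md by (simp add: algebra_simps)
      hence "\<mu> \<bullet> \<gamma> = (\<gamma> + \<epsilon>) \<bullet> \<gamma> + \<delta> \<bullet> \<gamma>" by (simp add: inner_add_left)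
      thus ?thesis using h1 h2 by simp
    qed
    define x where "x = \<gamma>s - \<delta>"
    have x: "x \<in> A" "x \<notin> S" "x \<notin> M_set R P S" using xJ unfolding J_set_def x_def by auto
    have xP: "x \<in> pos_roots R P" using x Apos by auto
    have xR: "x \<in> R" using xP posR by auto
    have gsJ: "\<gamma>s \<in> J_set R P A S" and gsmax: "\<forall>\<nu>\<in>J_set R P A S. root_le P \<gamma>s \<nu> \<longrightarrow> \<nu> = \<gamma>s"
      using gmax unfolding max_elems_def by auto
    have gsA: "\<gamma>s \<in> A" using gsJ unfolding J_set_def by auto
    have "\<gamma>s \<bullet> \<gamma> \<ge> 0" using A_nonneg[OF rs base ab gsA gA] .
    hence xg: "x \<bullet> \<gamma> > 0" using h3 unfolding x_def by (simp add: inner_diff_left)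
    have "x \<noteq> \<gamma>" using x gS by auto
    hence xgR: "x - \<gamma> \<in> R" using root_diff[OF rs xR gR xg] by simp
    have "x - \<gamma> \<notin> pos_roots R P"
    proof
      assume "x - \<gamma> \<in> pos_roots R P"
      hence "\<gamma> + (x - \<gamma>) \<in> M_set R P S" by (rule inM[OF gS]) (simp add: xP)
      thus False using x by simp
    qed
    hence "\<not> nonneg_comb P (x - \<gamma>)" using xgR unfolding pos_roots_def by auto
    hence gx: "nonneg_comb P (\<gamma> - x)" using base xgR unfolding is_base_def by auto
    have "\<mu> - \<gamma>s = \<epsilon> + (\<gamma> - x)" using md unfolding x_def by (simp add: algebra_simps)
    hence "nonneg_comb P (\<mu> - \<gamma>s)" using nn_add[OF en gx] by simp
    hence "root_le P \<gamma>s \<mu>" unfolding root_le_def by simp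
    hence "\<mu> = \<gamma>s" using gsmax muJ by auto
    hence "\<epsilon> = - (\<gamma> - x)" using \<open>\<mu> - \<gamma>s = \<epsilon> + (\<gamma> - x)\<close> by (simp add: algebra_simps)
    hence "nonneg_comb P (- \<epsilon>)" using gx by simp
    hence "\<epsilon> = 0" using nn_antisym[OF ind en] by simp
    thus False using eR rs unfolding root_system_def by auto
  qed
  show ?thesis using mdA notS notM unfolding J_set_def by auto
qed

theorem lemma3p8:
  fixes R P A S :: "'a::euclidean_space set" and \<gamma>s \<delta> \<mu> :: 'a
  assumes "root_system R" and "irreducible_rs R" and "is_base R P"
    and "abelian_ideal_roots R P A"
    and "S \<in> so_subsets R A"
    and "\<gamma>s \<in> max_elems P (J_set R P A S)"
    and "\<delta> \<in> pos_roots R P" and "\<gamma>s - \<delta> \<in> J_set R P A S"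
    and "\<mu> \<in> J_set R P A S"
  shows "(\<mu> - \<delta> \<in> A \<longrightarrow> \<mu> - \<delta> \<in> J_set R P A S) \<and>
         (\<mu> - 2 *\<^sub>R \<delta> \<in> A \<longrightarrow> \<mu> - \<delta> \<in> J_set R P A S \<and> \<mu> - 2 *\<^sub>R \<delta> \<in> J_set R P A S)"
proof (intro conjI impI)
  note rs = assms(1) and base = assms(3) and ab = assms(4) and dpos = assms(7)
  show "\<mu> - \<delta> \<in> A \<Longrightarrow> \<mu> - \<delta> \<in> J_set R P A S"
    using part1[OF assms(1,3,4,5,6,7,8,9)] by blast
  assume nA: "\<mu> - 2 *\<^sub>R \<delta> \<in> A"
  define \<nu> where "\<nu> = \<mu> - 2 *\<^sub>R \<delta>"
  have ind: "independent P" using base unfolding is_base_def by auto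
  have Apos: "A \<subseteq> pos_roots R P" using ab unfolding abelian_ideal_roots_def by auto
  have posR: "\<And>z. z \<in> pos_roots R P \<Longrightarrow> z \<in> R \<and> nonneg_comb P z" unfolding pos_roots_def by auto
  have muA: "\<mu> \<in> A" using assms(9) unfolding J_set_def by auto
  have muR: "\<mu> \<in> R" using muA Apos posR by auto
  have dR: "\<delta> \<in> R" and dn: "nonneg_comb P \<delta>" using dpos posR by auto
  have nuA: "\<nu> \<in> A" using nA \<nu>_def by simp
  have nuR: "\<nu> \<in> R" and nun: "nonneg_comb P \<nu>" using nuA Apos posR by auto
  have dd: "\<delta> \<bullet> \<delta> > 0" using dR rs unfolding root_system_def by auto
  have d0: "\<delta> \<noteq> 0" using dR rs unfolding root_system_def by auto
  have mdR: "\<mu> - \<delta> \<in> R"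
  proof (cases "\<mu> \<bullet> \<delta> > 0")
    case True
    have "\<mu> \<noteq> \<delta>"
    proof
      assume "\<mu> = \<delta>"
      hence "\<nu> = - \<delta>" unfolding \<nu>_def by (simp add: scaleR_2)
      hence "nonneg_comb P (- \<delta>)" using nun by simp
      thus False using nn_antisym[OF ind dn] d0 by simp
    qed
    thus ?thesis using root_diff[OF rs muR dR True] by simp
  next
    case False
    have "\<nu> \<bullet> \<delta> = \<mu> \<bullet> \<delta> - 2 * (\<delta> \<bullet> \<delta>)" unfolding \<nu>_def by (simp add: inner_diff_left)
    hence p: "\<nu> \<bullet> (- \<delta>) > 0" using False dd by (simp, linarith)
    have "\<nu> \<noteq> - \<delta>"
    proof
      assume "\<nu> = - \<delta>"
      hence "nonneg_comb P (- \<delta>)" using nun by simp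
      thus False using nn_antisym[OF ind dn] d0 by simp
    qed
    hence "\<nu> - (- \<delta>) \<in> R" using root_diff[OF rs nuR neg_root[OF rs dR] p] by simp
    moreover have "\<nu> - (- \<delta>) = \<mu> - \<delta>" unfolding \<nu>_def by (simp add: scaleR_2 algebra_simps)
    ultimately show ?thesis by simp
  qed
  have "\<mu> - \<delta> = \<nu> + \<delta>" unfolding \<nu>_def by (simp add: scaleR_2 algebra_simps)
  hence mdA: "\<mu> - \<delta> \<in> A" using ab nuA dpos mdR unfolding abelian_ideal_roots_def by auto
  show mdJ: "\<mu> - \<delta> \<in> J_set R P A S"
    using part1[OF assms(1,3,4,5,6,7,8,9) mdA] .
  have e: "(\<mu> - \<delta>) - \<delta> = \<mu> - 2 *\<^sub>R \<delta>" by (simp add: scaleR_2 algebra_simps)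
  have "(\<mu> - \<delta>) - \<delta> \<in> A" unfolding e by (rule nA)
  from part1[OF assms(1,3,4,5,6,7,8) mdJ this]
  have "(\<mu> - \<delta>) - \<delta> \<in> J_set R P A S" .
  moreover note e
  ultimately show "\<mu> - 2 *\<^sub>R \<delta> \<in> J_set R P A S" by simp
qed

end
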